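(* Let $\rho$ be a two-qubit state, with $\vec{x}\in\mathbb{R}^3$, $\vec{y}\in\mathbb{R}^3$ and $T\in\mathbb{R}^{3\times 3}$ defined by $x_i=\mathrm{Tr}[\rho(\sigma_i\otimes\mathbb{1})]$, $y_j=\mathrm{Tr}[\rho(\mathbb{1}\otimes\sigma_j)]$ and $T_{ij}=\mathrm{Tr}[\rho(\sigma_i\otimes\sigma_j)]$. For unit vectors $\vec{\ell}\in\mathbb{R}^3$ define $$\lambda_M(\vec{\ell}\,)=(\vec{y}\cdot\vec{\ell}\,)^2+\tfrac12\Big[|\vec{x}|^2+|T\vec{\ell}\,|^2+\sqrt{(|\vec{x}|^2-|T\vec{\ell}\,|^2)^2+4(\vec{x}\cdot T\vec{\ell}\,)^2}\Big],$$ and for unit vectors $\vec{k}\in\mathbb{R}^3$ define $$\lambda_N(\vec{k}\,)=(\vec{x}\cdot\vec{k}\,)^2+\tfrac12\Big[|\vec{y}|^2+|T^T\vec{k}\,|^2+\sqrt{(|\vec{y}|^2-|T^T\vec{k}\,|^2)^2+4(\vec{y}\cdot T^T\vec{k}\,)^2}\Big].$$ Then $\max_{|\vec{\ell}|=1}\lambda_M(\vec{\ell}\,)=\max_{|\vec{k}|=1}\lambda_N(\vec{k}\,)$, and, denoting this common value by $\lambda^{\max}$, $$G(\rho)=\tfrac14\Big[|\vec{x}|^2+|\vec{y}|^2+\|T\|^2-\lambda^{\max}\Big],$$ where $\|T\|^2=\sum_{i,j}T_{ij}^2$.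
   Context: $\sigma_1,\sigma_2,\sigma_3$ are the Pauli matrices and $\mathbb{1}$ the $2\times 2$ identity. The Hilbert–Schmidt distance is $D(M,N)=\sqrt{\mathrm{Tr}[(M-N)(M-N)^\dagger]}$. For unit vectors $\vec{k},\vec{\ell}\in\mathbb{R}^3$ let $\Pi^A_\pm=\frac12(\mathbb{1}\pm\vec{k}\cdot\vec{\sigma})$ and $\Pi^B_\pm=\frac12(\mathbb{1}\pm\vec{\ell}\cdot\vec{\sigma})$ be von Neumann measurements on qubits $A$ and $B$, and let $\chi_{\vec{k},\vec{\ell}}=\sum_{i,j\in\{+,-\}}(\Pi^A_i\otimes\Pi^B_j)\rho(\Pi^A_i\otimes\Pi^B_j)$ be the measurement-induced classical-classical state. The symmetric geometric measure of quantum correlation is $G(\rho)=\min_{\vec{k},\vec{\ell}}D^2(\rho,\chi_{\vec{k},\vec{\ell}})$, the minimum over all pairs of unit vectors. *)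

theory Defs
  imports "HOL-Analysis.Analysis"
begin

type_synonym qop = "complex^2^2"
type_synonym qqop = "complex^(2\<times>2)^(2\<times>2)"

definition sigma1 :: qop where
  "sigma1 = (\<chi> i j. if i \<noteq> j then 1 else 0)"
definition sigma2 :: qop where
  "sigma2 = (\<chi> i j. if i = 1 \<and> j = 2 then - \<i> else if i = 2 \<and> j = 1 then \<i> else 0)"
definition sigma3 :: qop where
  "sigma3 = (\<chi> i j. if i = j then (if i = 1 then 1 else -1) else 0)"

definition pauli :: "3 \<Rightarrow> qop" where
  "pauli i = (if i = 1 then sigma1 else if i = 2 then sigma2 else sigma3)"

definition cscale :: "complex \<Rightarrow> complex^'n^'m \<Rightarrow> complex^'n^'m" where
  "cscale c M = (\<chi> i j. c * M$i$j)"

definition ctrace :: "complex^'n^'n \<Rightarrow> complex" where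
  "ctrace M = (\<Sum>i\<in>UNIV. M$i$i)"

definition adjoint :: "complex^'n^'m \<Rightarrow> complex^'m^'n" where
  "adjoint M = (\<chi> i j. cnj (M$j$i))"

definition kron :: "qop \<Rightarrow> qop \<Rightarrow> qqop" where
  "kron A B = (\<chi> p q. A$(fst p)$(fst q) * B$(snd p)$(snd q))"

definition hermitian :: "complex^'n^'n \<Rightarrow> bool" where
  "hermitian M \<longleftrightarrow> adjoint M = M"

definition psd :: "complex^'n^'n \<Rightarrow> bool" where
  "psd M \<longleftrightarrow> hermitian M \<and>
     (\<forall>v :: complex^'n. let q = (\<Sum>i\<in>UNIV. \<Sum>j\<in>UNIV. cnj (v$i) * M$i$j * v$j)
                          in Im q = 0 \<and> Re q \<ge> 0)"

definition two_qubit_state :: "qqop \<Rightarrow> bool" where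
  "two_qubit_state \<rho> \<longleftrightarrow> psd \<rho> \<and> ctrace \<rho> = 1"

definition HS_dist_sq :: "complex^'n^'n \<Rightarrow> complex^'n^'n \<Rightarrow> real" where
  "HS_dist_sq M N = Re (ctrace ((M - N) ** adjoint (M - N)))"

definition HS_dist :: "complex^'n^'n \<Rightarrow> complex^'n^'n \<Rightarrow> real" where
  "HS_dist M N = sqrt (HS_dist_sq M N)"

definition dot_sigma :: "real^3 \<Rightarrow> qop" where
  "dot_sigma k = (\<Sum>i\<in>UNIV. cscale (complex_of_real (k$i)) (pauli i))"

definition proj :: "real^3 \<Rightarrow> bool \<Rightarrow> qop" where
  "proj k s = cscale (1/2) (mat 1 + cscale (if s then 1 else -1) (dot_sigma k))"

definition chi_cc :: "qqop \<Rightarrow> real^3 \<Rightarrow> real^3 \<Rightarrow> qqop" where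
  "chi_cc \<rho> k l = (\<Sum>s\<in>UNIV. \<Sum>t\<in>UNIV.
      kron (proj k s) (proj l t) ** \<rho> ** kron (proj k s) (proj l t))"

definition G :: "qqop \<Rightarrow> real" where
  "G \<rho> = Inf {HS_dist \<rho> (chi_cc \<rho> k l) ^ 2 | k l. norm k = 1 \<and> norm l = 1}"

definition bloch_x :: "qqop \<Rightarrow> real^3" where
  "bloch_x \<rho> = (\<chi> i. Re (ctrace (\<rho> ** kron (pauli i) (mat 1))))"
definition bloch_y :: "qqop \<Rightarrow> real^3" where
  "bloch_y \<rho> = (\<chi> j. Re (ctrace (\<rho> ** kron (mat 1) (pauli j))))"
definition corr_T :: "qqop \<Rightarrow> real^3^3" where
  "corr_T \<rho> = (\<chi> i j. Re (ctrace (\<rho> ** kron (pauli i) (pauli j))))"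

definition lambda_M :: "qqop \<Rightarrow> real^3 \<Rightarrow> real" where
  "lambda_M \<rho> l = (let x = bloch_x \<rho>; y = bloch_y \<rho>; Tl = corr_T \<rho> *v l in
     (y \<bullet> l)^2 + (1/2) * (norm x ^ 2 + norm Tl ^ 2
        + sqrt ((norm x ^ 2 - norm Tl ^ 2)^2 + 4 * (x \<bullet> Tl)^2)))"

definition lambda_N :: "qqop \<Rightarrow> real^3 \<Rightarrow> real" where
  "lambda_N \<rho> k = (let x = bloch_x \<rho>; y = bloch_y \<rho>; Tk = transpose (corr_T \<rho>) *v k in
     (x \<bullet> k)^2 + (1/2) * (norm y ^ 2 + norm Tk ^ 2
        + sqrt ((norm y ^ 2 - norm Tk ^ 2)^2 + 4 * (y \<bullet> Tk)^2)))"

end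

theory Submission imports Defs begin
lemma sum_22: "sum f (UNIV::(2\<times>2) set) = f(1,1)+f(1,2)+f(2,1)+f(2,2)"
proof -
  have "sum f (UNIV::(2\<times>2) set) = sum f (UNIV \<times> UNIV)" by simp
  also have "\<dots> = (\<Sum>a\<in>UNIV. \<Sum>b\<in>UNIV. f (a,b))" by (simp add: sum.cartesian_product)
  finally show ?thesis by (simp add: sum_2 algebra_simps)
qed
lemma forall_22: "(\<forall>p::2\<times>2. P p) \<longleftrightarrow> P(1,1) \<and> P(1,2) \<and> P(2,1) \<and> P(2,2)"
  by (simp only: split_paired_All forall_2) blast

definition Rm :: "real \<Rightarrow> real^3 \<Rightarrow> real^3 \<Rightarrow> real^3^3 \<Rightarrow> qqop" where
 "Rm c x y T = (\<chi> p q. (1/4) * (of_real c * (if p = q then 1 else 0)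
    + (\<Sum>i\<in>UNIV. of_real (x$i) * kron (pauli i) (mat 1) $ p $ q)
    + (\<Sum>j\<in>UNIV. of_real (y$j) * kron (mat 1) (pauli j) $ p $ q)
    + (\<Sum>i\<in>UNIV. \<Sum>j\<in>UNIV. of_real (T$i$j) * kron (pauli i) (pauli j) $ p $ q)))"

lemmas ent_simps = kron_def mat_def pauli_def sigma1_def sigma2_def sigma3_def sum_2 sum_3 sum_22

lemma herm_entry: "hermitian M \<Longrightarrow> M$q$p = cnj (M$p$q)"
  unfolding hermitian_def adjoint_def by (metis complex_cnj_cnj vec_lambda_beta)

lemma p3: "pauli 3 = sigma3" by (simp add: pauli_def)
lemma p2: "pauli 2 = sigma2" by (simp add: pauli_def)
lemma p1: "pauli 1 = sigma1" by (simp add: pauli_def)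
lemma s3: "sigma3 $ 1 $ 1 = 1" "sigma3 $ 1 $ 2 = 0" "sigma3 $ 2 $ 1 = 0" "sigma3 $ 2 $ 2 = -1"
  by (simp_all add: sigma3_def)
lemma s2: "sigma2 $ 1 $ 1 = 0" "sigma2 $ 1 $ 2 = -\<i>" "sigma2 $ 2 $ 1 = \<i>" "sigma2 $ 2 $ 2 = 0"
  by (simp_all add: sigma2_def)
lemma s1: "sigma1 $ 1 $ 1 = 0" "sigma1 $ 1 $ 2 = 1" "sigma1 $ 2 $ 1 = 1" "sigma1 $ 2 $ 2 = 0"
  by (simp_all add: sigma1_def)
lemma kron_ent: "kron A B $ (a,b) $ (c,d) = A$a$c * B$b$d" by (simp add: kron_def)
lemma mat1_ent: "(mat 1 :: complex^2^2) $ 1 $ 1 = 1" "(mat 1 :: complex^2^2) $ 1 $ 2 = 0"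
  "(mat 1 :: complex^2^2) $ 2 $ 1 = 0" "(mat 1 :: complex^2^2) $ 2 $ 2 = 1"
  by (simp_all add: mat_def)
lemmas E = p1 p2 p3 s1 s2 s3 kron_ent mat1_ent sum_2 sum_3 sum_22
lemma "Rm c x y T $ (1,1) $ (1,2) = (1/4) * (of_real (y$1) - \<i> * of_real (y$2) + of_real (T$3$1) - \<i> * of_real (T$3$2))"
  by (simp add: Rm_def E)
lemma
  assumes h: "hermitian \<rho>" and t: "ctrace \<rho> = 1"
  shows "\<rho>$(1,1)$(1,2) = Rm 1 (bloch_x \<rho>) (bloch_y \<rho>) (corr_T \<rho>) $(1,1)$(1,2)"
proof -
  note H = herm_entry[OF h]
  show ?thesis
    by (simp add: Rm_def bloch_x_def bloch_y_def corr_T_def ctrace_def matrix_matrix_mult_def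
       E H[of "(1,1)" "(1,2)"] H[of "(1,1)" "(2,1)"] H[of "(1,1)" "(2,2)"]
       H[of "(1,2)" "(2,1)"] H[of "(1,2)" "(2,2)"] H[of "(2,1)" "(2,2)"] complex_eq_iff)
qed
lemma pauli_expansion:
  assumes h: "hermitian \<rho>" and t: "ctrace \<rho> = 1"
  shows "\<rho> = Rm 1 (bloch_x \<rho>) (bloch_y \<rho>) (corr_T \<rho>)"
proof -
  note H = herm_entry[OF h]
  have d: "Im (\<rho>$p$p) = 0" for p using H[of p p] by (metis cnj.simps(2) neg_equal_zero)
  have t': "Re (\<rho>$(1,1)$(1,1)) + Re (\<rho>$(1,2)$(1,2)) + Re (\<rho>$(2,1)$(2,1)) + Re (\<rho>$(2,2)$(2,2)) = 1"
    using t by (simp add: ctrace_def sum_22 complex_eq_iff)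
  show ?thesis
    unfolding vec_eq_iff forall_22
    using t' d[of "(1,1)"] d[of "(1,2)"] d[of "(2,1)"] d[of "(2,2)"]
    by (simp add: Rm_def bloch_x_def bloch_y_def corr_T_def ctrace_def matrix_matrix_mult_def
       E H[of "(1,1)" "(1,2)"] H[of "(1,1)" "(2,1)"] H[of "(1,1)" "(2,2)"]
       H[of "(1,2)" "(2,1)"] H[of "(1,2)" "(2,2)"] H[of "(2,1)" "(2,2)"] complex_eq_iff)
qed
lemma hs_entries: "Re (ctrace (M ** adjoint M)) = (\<Sum>p\<in>UNIV. \<Sum>q\<in>UNIV. (Re (M$p$q))^2 + (Im (M$p$q))^2)"
  unfolding ctrace_def matrix_matrix_mult_def adjoint_def
  by (simp add: Re_sum power2_eq_square)

lemma Rm_norm: "Re (ctrace (Rm c x y T ** adjoint (Rm c x y T))) =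
   (1/4) * (c^2 + (\<Sum>i\<in>UNIV. (x$i)^2) + (\<Sum>i\<in>UNIV. (y$i)^2) + (\<Sum>i\<in>UNIV. \<Sum>j\<in>UNIV. (T$i$j)^2))"
  unfolding hs_entries
  apply (simp add: Rm_def E)
  apply (simp add: power2_eq_square field_simps)
  done
lemma ds_ent: "dot_sigma k $ 1 $ 1 = of_real (k$3)" "dot_sigma k $ 1 $ 2 = of_real (k$1) - \<i> * of_real (k$2)"
  "dot_sigma k $ 2 $ 1 = of_real (k$1) + \<i> * of_real (k$2)" "dot_sigma k $ 2 $ 2 = - of_real (k$3)"
  by (simp_all add: dot_sigma_def cscale_def E)

lemma unit3: "norm (k::real^3) = 1 \<Longrightarrow> k$1*k$1 + k$2*k$2 + k$3*k$3 = 1"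
  by (simp add: norm_eq_1 inner_vec_def sum_3)

definition dephase :: "real^3 \<Rightarrow> qop \<Rightarrow> qop" where
  "dephase k A = (\<Sum>s\<in>UNIV. proj k s ** A ** proj k s)"

lemma sum_bool: "sum f (UNIV::bool set) = f True + f False"
  by (simp add: UNIV_bool add.commute)

lemma deph_id: assumes "norm k = 1" shows "dephase k (mat 1) = mat 1"
  using unit3[OF assms]
  unfolding vec_eq_iff forall_2
  apply (simp add: dephase_def proj_def cscale_def matrix_matrix_mult_def sum_bool E ds_ent complex_eq_iff algebra_simps)
  apply (simp add: field_simps)
  done

lemma deph_pauli: assumes "norm k = 1" shows "dephase k (pauli i) = cscale (of_real (k$i)) (dot_sigma k)"
  using unit3[OF assms] exhaust_3[of i]
  unfolding vec_eq_iff forall_2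
  apply (auto simp add: dephase_def proj_def cscale_def matrix_matrix_mult_def sum_bool E ds_ent complex_eq_iff algebra_simps)
  apply (simp_all add: field_simps)
  done

lemma kron_mult: "kron A B ** kron C D = kron (A ** C) (B ** D)"
  unfolding vec_eq_iff split_paired_All
  by (simp add: kron_def matrix_matrix_mult_def sum_22 sum_2 algebra_simps)

lemma chi_kron: "chi_cc (kron A B) k l = kron (dephase k A) (dephase l B)"
  unfolding chi_cc_def dephase_def kron_mult
  by (simp add: vec_eq_iff kron_def sum_bool algebra_simps)

lemma cscale_mult_l: "cscale c A ** B = cscale c (A ** B)"
  by (simp add: vec_eq_iff cscale_def matrix_matrix_mult_def sum_distrib_left mult.assoc)
lemma cscale_mult_r: "A ** cscale c B = cscale c (A ** B)"
  by (simp add: vec_eq_iff cscale_def matrix_matrix_mult_def sum_distrib_left algebra_simps)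
lemma cscale_add: "cscale c (A + B) = cscale c A + cscale c B"
  by (simp add: vec_eq_iff cscale_def algebra_simps)
lemma cscale_sum: "cscale c (sum f S) = sum (\<lambda>i. cscale c (f i)) S"
  by (simp add: vec_eq_iff cscale_def sum_distrib_left)
lemma cscale_cscale: "cscale c (cscale d A) = cscale (c*d) A"
  by (simp add: vec_eq_iff cscale_def)

lemma matrix_add_rdistrib: "((B + C) ** A) = (B ** A) + (C ** A)"
  by (simp add: vec_eq_iff matrix_matrix_mult_def sum.distrib algebra_simps)
lemma chi_add: "chi_cc (A + B) k l = chi_cc A k l + chi_cc B k l"
  unfolding chi_cc_def by (simp add: matrix_add_ldistrib matrix_add_rdistrib sum.distrib)
lemma chi_zero: "chi_cc 0 k l = 0"
  unfolding chi_cc_def by (simp add: vec_eq_iff matrix_matrix_mult_def)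
lemma chi_scale: "chi_cc (cscale c A) k l = cscale c (chi_cc A k l)"
  unfolding chi_cc_def by (simp add: cscale_mult_l cscale_mult_r cscale_sum)
lemma chi_sum: "finite S \<Longrightarrow> chi_cc (sum f S) k l = sum (\<lambda>i. chi_cc (f i) k l) S"
  by (induction S rule: finite_induct) (simp_all add: chi_zero chi_add)

lemma Rm_decomp: "Rm c x y T = cscale (1/4) (cscale (of_real c) (kron (mat 1) (mat 1))
   + (\<Sum>i\<in>UNIV. cscale (of_real (x$i)) (kron (pauli i) (mat 1)))
   + (\<Sum>j\<in>UNIV. cscale (of_real (y$j)) (kron (mat 1) (pauli j)))
   + (\<Sum>i\<in>UNIV. \<Sum>j\<in>UNIV. cscale (of_real (T$i$j)) (kron (pauli i) (pauli j))))"
  unfolding vec_eq_iff split_paired_All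
  by (simp add: Rm_def cscale_def kron_def mat_def)

lemma chi_Rm:
  assumes k: "norm k = 1" and l: "norm l = 1"
  shows "chi_cc (Rm 1 x y T) k l = Rm 1 (\<chi> i. (x \<bullet> k) * k$i) (\<chi> j. (y \<bullet> l) * l$j)
            (\<chi> i j. (k \<bullet> (T *v l)) * k$i * l$j)"
proof -
  have "chi_cc (Rm 1 x y T) k l = cscale (1/4) (cscale 1 (kron (mat 1) (mat 1))
   + (\<Sum>i\<in>UNIV. cscale (of_real (x$i)) (kron (cscale (of_real (k$i)) (dot_sigma k)) (mat 1)))
   + (\<Sum>j\<in>UNIV. cscale (of_real (y$j)) (kron (mat 1) (cscale (of_real (l$j)) (dot_sigma l))))
   + (\<Sum>i\<in>UNIV. \<Sum>j\<in>UNIV. cscale (of_real (T$i$j)) (kron (cscale (of_real (k$i)) (dot_sigma k)) (cscale (of_real (l$j)) (dot_sigma l)))))"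
    by (simp add: Rm_decomp chi_scale chi_add chi_sum chi_kron deph_id deph_pauli k l)
  then show ?thesis
    unfolding vec_eq_iff forall_22
    apply (simp add: Rm_def cscale_def E ds_ent inner_vec_def matrix_vector_mult_def complex_eq_iff)
    apply (simp_all add: field_simps)
    done
qed

lemma Rm_diff: "Rm c x y T - Rm c' x' y' T' = Rm (c - c') (x - x') (y - y') (T - T')"
  unfolding vec_eq_iff by (simp add: Rm_def sum_3 algebra_simps)

lemma norm_sq3: "norm (x::real^3)^2 = (\<Sum>i\<in>UNIV. (x$i)^2)"
  unfolding power2_norm_eq_inner inner_vec_def by (simp add: power2_eq_square)

lemma sub_proj3:
  fixes x k :: "real^3"
  assumes "k$1*k$1+k$2*k$2+k$3*k$3 = 1"
  shows "(\<Sum>i\<in>UNIV. ((x - (\<chi> i. (x \<bullet> k)*k$i))$i)^2) = (\<Sum>i\<in>UNIV. (x$i)^2) - (x \<bullet> k)^2"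
proof -
  have "(\<Sum>i\<in>UNIV. ((x - (\<chi> i. (x \<bullet> k)*k$i))$i)^2) = (\<Sum>i\<in>UNIV. (x$i)^2) - 2*(x \<bullet> k)*(x \<bullet> k)
     + (x \<bullet> k)^2 * (k$1*k$1+k$2*k$2+k$3*k$3)"
    by (simp add: sum_3 inner_vec_def power2_eq_square algebra_simps)
  then show ?thesis using assms by (simp add: power2_eq_square)
qed

lemma sub_projT:
  fixes k l :: "real^3" and T :: "real^3^3"
  assumes "k$1*k$1+k$2*k$2+k$3*k$3 = 1" "l$1*l$1+l$2*l$2+l$3*l$3 = 1"
  shows "(\<Sum>i\<in>UNIV. \<Sum>j\<in>UNIV. ((T - (\<chi> i j. (k \<bullet> (T *v l))*k$i*l$j))$i$j)^2)
     = (\<Sum>i\<in>UNIV. \<Sum>j\<in>UNIV. (T$i$j)^2) - (k \<bullet> (T *v l))^2"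
proof -
  define e where "e = k \<bullet> (T *v l)"
  have 1: "(\<Sum>i\<in>UNIV. \<Sum>j\<in>UNIV. ((T - (\<chi> i j. e*k$i*l$j))$i$j)^2)
     = (\<Sum>i\<in>UNIV. \<Sum>j\<in>UNIV. (T$i$j)^2) - 2*e*(\<Sum>i\<in>UNIV. \<Sum>j\<in>UNIV. T$i$j*k$i*l$j)
     + e^2 * (k$1*k$1+k$2*k$2+k$3*k$3) * (l$1*l$1+l$2*l$2+l$3*l$3)"
    by (simp add: sum_3 power2_eq_square algebra_simps)
  have 2: "(\<Sum>i\<in>UNIV. \<Sum>j\<in>UNIV. T$i$j*k$i*l$j) = e"
    by (simp add: e_def sum_3 inner_vec_def matrix_vector_mult_def algebra_simps)
  show ?thesis using 1 2 assms unfolding e_def[symmetric] by (simp add: power2_eq_square)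
qed

lemma D_formula:
  assumes st: "two_qubit_state \<rho>" and k: "norm k = 1" and l: "norm l = 1"
  shows "HS_dist \<rho> (chi_cc \<rho> k l) ^ 2 = (1/4) * (norm (bloch_x \<rho>)^2 + norm (bloch_y \<rho>)^2
     + (\<Sum>i\<in>UNIV. \<Sum>j\<in>UNIV. (corr_T \<rho> $i$j)^2)
     - ((bloch_x \<rho> \<bullet> k)^2 + (bloch_y \<rho> \<bullet> l)^2 + (k \<bullet> (corr_T \<rho> *v l))^2))"
proof -
  define x where "x = bloch_x \<rho>"
  define y where "y = bloch_y \<rho>"
  define T where "T = corr_T \<rho>"
  have h: "hermitian \<rho>" and t: "ctrace \<rho> = 1" using st by (auto simp: two_qubit_state_def psd_def)
  have e: "\<rho> = Rm 1 x y T" unfolding x_def y_def T_def by (rule pauli_expansion[OF h t])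
  have dif: "\<rho> - chi_cc \<rho> k l = Rm 0 (x - (\<chi> i. (x \<bullet> k) * k$i)) (y - (\<chi> j. (y \<bullet> l) * l$j))
            (T - (\<chi> i j. (k \<bullet> (T *v l)) * k$i * l$j))"
    by (subst (2) e, subst chi_Rm[OF k l], subst (1) e, simp add: Rm_diff)
  have sq: "HS_dist_sq \<rho> (chi_cc \<rho> k l) = (1/4) * (norm x^2 + norm y^2
     + (\<Sum>i\<in>UNIV. \<Sum>j\<in>UNIV. (T $i$j)^2) - ((x \<bullet> k)^2 + (y \<bullet> l)^2 + (k \<bullet> (T *v l))^2))"
    unfolding HS_dist_sq_def dif Rm_norm norm_sq3
    using sub_proj3[OF unit3[OF k], of x] sub_proj3[OF unit3[OF l], of y] sub_projT[OF unit3[OF k] unit3[OF l], of T]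
    by simp
  have nn: "HS_dist_sq \<rho> (chi_cc \<rho> k l) \<ge> 0"
    unfolding HS_dist_sq_def hs_entries by (intro sum_nonneg) simp
  show ?thesis unfolding HS_dist_def using nn sq by (simp add: x_def y_def T_def)
qed
definition lam :: "real^3 \<Rightarrow> real^3 \<Rightarrow> real" where
  "lam a v = (1/2) * (norm a ^2 + norm v ^2 + sqrt ((norm a ^2 - norm v ^2)^2 + 4*(a \<bullet> v)^2))"

lemma psd2:
  fixes al be C p q :: real
  assumes "al \<ge> 0" "be \<ge> 0" "al * be = C^2"
  shows "al*p^2 - 2*C*p*q + be*q^2 \<ge> 0"
proof (cases "al = 0")
  case True
  then have "C = 0" using assms by simp
  then show ?thesis using True assms by simp
next
  case False
  then have pos: "al > 0" using assms by simp
  have "al * (al*p^2 - 2*C*p*q + be*q^2) = (al*p - C*q)^2"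
    using assms(3) by (simp add: power2_eq_square algebra_simps)
  then have "al * (al*p^2 - 2*C*p*q + be*q^2) \<ge> 0" by simp
  then show ?thesis using pos by (simp add: zero_le_mult_iff)
qed

lemma lam_facts:
  fixes a v :: "real^3"
  defines "A \<equiv> a \<bullet> a" and "B \<equiv> v \<bullet> v" and "C \<equiv> a \<bullet> v"
  shows "lam a v - A \<ge> 0" "lam a v - B \<ge> 0" "(lam a v - A) * (lam a v - B) = C^2"
proof -
  define R where "R = sqrt ((A - B)^2 + 4*C^2)"
  have L: "lam a v = (A + B + R)/2"
    by (simp add: lam_def R_def A_def B_def C_def power2_norm_eq_inner)
  have R2: "R^2 = (A - B)^2 + 4*C^2" unfolding R_def by simp
  have Rge: "R \<ge> \<bar>A - B\<bar>" unfolding R_def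
    by (rule real_le_rsqrt) simp
  show "lam a v - A \<ge> 0" "lam a v - B \<ge> 0" using Rge L by auto
  show "(lam a v - A) * (lam a v - B) = C^2" using R2 unfolding L
    by (simp add: power2_eq_square field_simps)
qed

lemma lam_bound:
  fixes a v k :: "real^3"
  assumes k: "norm k = 1"
  shows "(a \<bullet> k)^2 + (v \<bullet> k)^2 \<le> lam a v"
proof -
  define A where "A = a \<bullet> a"
  define B where "B = v \<bullet> v"
  define C where "C = a \<bullet> v"
  define L where "L = lam a v"
  define p where "p = a \<bullet> k"
  define q where "q = v \<bullet> k"
  define s where "s = p^2 + q^2"
  have al: "L - A \<ge> 0" and be: "L - B \<ge> 0" and ab: "(L - A) * (L - B) = C^2"
    using lam_facts[of a v] unfolding A_def B_def C_def L_def by auto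
  define w where "w = p *\<^sub>R a + q *\<^sub>R v"
  have wk: "w \<bullet> k = s" unfolding w_def s_def p_def q_def
    by (simp add: inner_add_left power2_eq_square)
  have ww: "w \<bullet> w = p^2*A + 2*p*q*C + q^2*B" unfolding w_def A_def B_def C_def
    by (simp add: inner_add_left inner_add_right inner_commute power2_eq_square algebra_simps)
  have kk: "k \<bullet> k = 1" using k by (simp add: norm_eq_1)
  have cs: "s^2 \<le> w \<bullet> w" using Cauchy_Schwarz_ineq[of w k] wk kk by simp
  have Q: "p^2*A + 2*p*q*C + q^2*B \<le> L * s"
    using psd2[OF al be ab, of p q] unfolding s_def by (simp add: algebra_simps)
  have s0: "s \<ge> 0" unfolding s_def by simp
  have "s^2 \<le> L * s" using cs ww Q by simp
  then have "s \<le> L"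
  proof (cases "s = 0")
    case True then show ?thesis using be inner_ge_zero[of v] unfolding B_def by linarith
  next
    case False
    then have "s > 0" using s0 by simp
    then show ?thesis using \<open>s^2 \<le> L * s\<close> by (simp add: power2_eq_square)
  qed
  then show ?thesis unfolding s_def p_def q_def L_def .
qed

lemma lam_attain:
  fixes a v :: "real^3"
  shows "\<exists>k. norm k = 1 \<and> (a \<bullet> k)^2 + (v \<bullet> k)^2 = lam a v"
proof -
  define A where "A = a \<bullet> a"
  define B where "B = v \<bullet> v"
  define C where "C = a \<bullet> v"
  define L where "L = lam a v"
  have al: "L - A \<ge> 0" and be: "L - B \<ge> 0" and ab: "(L - A) * (L - B) = C^2"
    using lam_facts[of a v] unfolding A_def B_def C_def L_def by auto
  have A0: "A \<ge> 0" and B0: "B \<ge> 0" unfolding A_def B_def by simp_all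
  show ?thesis
  proof (cases "L = A")
    case True
    then have C0: "C = 0" using ab by simp
    show ?thesis
    proof (cases "a = 0")
      case True
      then have "A = 0" unfolding A_def by simp
      then have "B = 0" using be B0 \<open>L = A\<close> by simp
      then have "v = 0" unfolding B_def by simp
      then show ?thesis using \<open>a = 0\<close> \<open>L = A\<close> \<open>A = 0\<close> L_def
        by (intro exI[of _ "axis 1 1"]) simp
    next
      case False
      define k where "k = (1 / norm a) *\<^sub>R a"
      have nk: "norm k = 1" unfolding k_def using False by simp
      have "a \<bullet> k = norm a" unfolding k_def using False
        by (simp add: power2_norm_eq_inner[symmetric] power2_eq_square)
      then have "(a \<bullet> k)^2 = A" unfolding A_def by (simp add: power2_norm_eq_inner)
      moreover have "v \<bullet> k = 0" unfolding k_def using C0 C_def by (simp add: inner_commute)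
      ultimately show ?thesis using nk \<open>L = A\<close> L_def by auto
    qed
  next
    case False
    define al where "al = L - A"
    have alp: "al > 0" using al False unfolding al_def by simp
    define u where "u = C *\<^sub>R a + al *\<^sub>R v"
    have au: "a \<bullet> u = C * L" unfolding u_def al_def A_def C_def
      by (simp add: inner_add_right algebra_simps)
    have vu: "v \<bullet> u = al * L" unfolding u_def
    proof -
      have "v \<bullet> (C *\<^sub>R a + al *\<^sub>R v) = C*C + al * B"
        unfolding B_def C_def by (simp add: inner_add_right inner_commute)
      also have "\<dots> = al * L" using ab unfolding al_def by (simp add: power2_eq_square algebra_simps)
      finally show "v \<bullet> (C *\<^sub>R a + al *\<^sub>R v) = al * L" .
    qed
    have uu: "u \<bullet> u = L * (C^2 + al^2)"
    proof -
      have "u \<bullet> u = C * (a \<bullet> u) + al * (v \<bullet> u)" unfolding u_def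
        by (simp add: inner_add_left)
      then show ?thesis using au vu by (simp add: power2_eq_square algebra_simps)
    qed
    have Lp: "L > 0" using alp A0 unfolding al_def by simp
    have cp: "C^2 + al^2 > 0" using alp by (simp add: add_nonneg_pos)
    have uup: "u \<bullet> u > 0" using uu Lp cp by simp
    then have un: "u \<noteq> 0" by auto
    define k where "k = (1 / norm u) *\<^sub>R u"
    have nk: "norm k = 1" unfolding k_def using un by simp
    have nu2: "(norm u)^2 = u \<bullet> u" by (simp add: power2_norm_eq_inner)
    have "(a \<bullet> k)^2 + (v \<bullet> k)^2 = ((a \<bullet> u)^2 + (v \<bullet> u)^2) / (norm u)^2"
      unfolding k_def by (simp add: power_divide add_divide_distrib)
    also have "\<dots> = (L^2 * (C^2 + al^2)) / (L * (C^2 + al^2))"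
      unfolding nu2 uu au vu by (simp add: power2_eq_square algebra_simps)
    also have "\<dots> = L" using Lp cp alp by (simp add: power2_eq_square)
    finally show ?thesis using nk L_def by auto
  qed
qed

lemma lamM_eq: "lambda_M \<rho> l = (bloch_y \<rho> \<bullet> l)^2 + lam (bloch_x \<rho>) (corr_T \<rho> *v l)"
  by (simp add: lambda_M_def Let_def lam_def)
lemma lamN_eq: "lambda_N \<rho> k = (bloch_x \<rho> \<bullet> k)^2 + lam (bloch_y \<rho>) (transpose (corr_T \<rho>) *v k)"
  by (simp add: lambda_N_def Let_def lam_def)
lemma inner_T: "(k::real^3) \<bullet> (T *v l) = (transpose T *v k) \<bullet> l"
  by (simp add: dot_lmul_matrix)

theorem mainTheorem1:
  fixes \<rho> :: qqop
  assumes "two_qubit_state \<rho>"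
  defines "S \<equiv> {v :: real^3. norm v = 1}"
  shows "(\<exists>l\<in>S. lambda_M \<rho> l = (SUP l'\<in>S. lambda_M \<rho> l'))
       \<and> (\<exists>k\<in>S. lambda_N \<rho> k = (SUP k'\<in>S. lambda_N \<rho> k'))
       \<and> (SUP l\<in>S. lambda_M \<rho> l) = (SUP k\<in>S. lambda_N \<rho> k)
       \<and> G \<rho> = (1/4) * (norm (bloch_x \<rho>) ^ 2 + norm (bloch_y \<rho>) ^ 2
                  + (\<Sum>i\<in>UNIV. \<Sum>j\<in>UNIV. (corr_T \<rho> $ i $ j)^2)
                  - (SUP l\<in>S. lambda_M \<rho> l))"
proof -
  define x where "x = bloch_x \<rho>"
  define y where "y = bloch_y \<rho>"
  define T where "T = corr_T \<rho>"
  define F where "F k l = (x \<bullet> k)^2 + (y \<bullet> l)^2 + (k \<bullet> (T *v l))^2" for k l :: "real^3"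
  define N where "N = norm x ^ 2 + norm y ^ 2 + (\<Sum>i\<in>UNIV. \<Sum>j\<in>UNIV. (T $ i $ j)^2)"
  have SS: "S = sphere 0 1" unfolding S_def by auto
  have cS: "compact S" unfolding SS by simp
  have neS: "S \<noteq> {}" unfolding S_def using norm_axis_1[of 1] by blast
  have bM: "F k l \<le> lambda_M \<rho> l" if "k \<in> S" for k l
    using lam_bound[of k x "T *v l"] that
    unfolding F_def lamM_eq x_def[symmetric] y_def[symmetric] T_def[symmetric] S_def
    by (simp add: inner_commute)
  have aM: "\<exists>k\<in>S. F k l = lambda_M \<rho> l" for l
  proof -
    obtain k where "norm k = 1" "(x \<bullet> k)^2 + ((T *v l) \<bullet> k)^2 = lam x (T *v l)"
      using lam_attain[of x "T *v l"] by blast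
    then show ?thesis
      unfolding F_def lamM_eq x_def[symmetric] y_def[symmetric] T_def[symmetric] S_def
      by (intro bexI[of _ k]) (simp_all add: inner_commute)
  qed
  have bN: "F k l \<le> lambda_N \<rho> k" if "l \<in> S" for k l
    using lam_bound[of l y "transpose T *v k"] that
    unfolding F_def lamN_eq x_def[symmetric] y_def[symmetric] T_def[symmetric] S_def inner_T[of k T l]
    by (simp add: inner_commute)
  have aN: "\<exists>l\<in>S. F k l = lambda_N \<rho> k" for k
  proof -
    obtain l where "norm l = 1" "(y \<bullet> l)^2 + ((transpose T *v k) \<bullet> l)^2 = lam y (transpose T *v k)"
      using lam_attain[of y "transpose T *v k"] by blast
    then show ?thesis
      unfolding F_def lamN_eq x_def[symmetric] y_def[symmetric] T_def[symmetric] S_def inner_T[of k T]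
      by (intro bexI[of _ l]) (simp_all add: inner_commute)
  qed
  have contM: "continuous_on S (lambda_M \<rho>)"
  proof -
    have "continuous_on S (\<lambda>l. (y \<bullet> l)^2 + lam x (T *v l))"
      unfolding lam_def by (intro continuous_intros)
    moreover have "(\<lambda>l. (y \<bullet> l)^2 + lam x (T *v l)) = lambda_M \<rho>"
      by (rule ext) (simp add: lamM_eq x_def y_def T_def)
    ultimately show ?thesis by (simp only:)
  qed
  have contN: "continuous_on S (lambda_N \<rho>)"
  proof -
    have "continuous_on S (\<lambda>k. (x \<bullet> k)^2 + lam y (transpose T *v k))"
      unfolding lam_def by (intro continuous_intros)
    moreover have "(\<lambda>k. (x \<bullet> k)^2 + lam y (transpose T *v k)) = lambda_N \<rho>"
      by (rule ext) (simp add: lamN_eq x_def y_def T_def)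
    ultimately show ?thesis by (simp only:)
  qed
  obtain l0 where l0: "l0 \<in> S" "\<forall>l\<in>S. lambda_M \<rho> l \<le> lambda_M \<rho> l0"
    using continuous_attains_sup[OF cS neS contM] by blast
  obtain k0 where k0: "k0 \<in> S" "\<forall>k\<in>S. lambda_N \<rho> k \<le> lambda_N \<rho> k0"
    using continuous_attains_sup[OF cS neS contN] by blast
  have supM: "(SUP l\<in>S. lambda_M \<rho> l) = lambda_M \<rho> l0"
    by (rule cSup_eq_maximum) (use l0 in auto)
  have supN: "(SUP k\<in>S. lambda_N \<rho> k) = lambda_N \<rho> k0"
    by (rule cSup_eq_maximum) (use k0 in auto)
  obtain k1 where k1: "k1 \<in> S" "F k1 l0 = lambda_M \<rho> l0" using aM by blast
  obtain l1 where l1: "l1 \<in> S" "F k0 l1 = lambda_N \<rho> k0" using aN by blast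
  have le1: "lambda_M \<rho> l0 \<le> lambda_N \<rho> k0"
    using k1 bN[of l0 k1] l0(1) k0(2) k1(1) by force
  have le2: "lambda_N \<rho> k0 \<le> lambda_M \<rho> l1"
    using l1 bM[of k0 l1] k0(1) by force
  have le3: "lambda_M \<rho> l1 \<le> lambda_M \<rho> l0" using l0(2) l1(1) by blast
  have eqMN: "lambda_M \<rho> l0 = lambda_N \<rho> k0" using le1 le2 le3 by linarith
  have Dk: "HS_dist \<rho> (chi_cc \<rho> k l) ^ 2 = (1/4) * (N - F k l)" if "k \<in> S" "l \<in> S" for k l
    using D_formula[OF assms(1), of k l] that unfolding S_def N_def F_def x_def y_def T_def by simp
  have Gv: "G \<rho> = (1/4) * (N - lambda_M \<rho> l0)"
    unfolding G_def
  proof (rule cInf_eq_minimum)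
    show "1/4 * (N - lambda_M \<rho> l0) \<in> {HS_dist \<rho> (chi_cc \<rho> k l) ^ 2 | k l. norm k = 1 \<and> norm l = 1}"
    proof -
      have "HS_dist \<rho> (chi_cc \<rho> k1 l0) ^ 2 = 1/4 * (N - lambda_M \<rho> l0)"
        using Dk[OF k1(1) l0(1)] k1(2) by simp
      then show ?thesis using k1(1) l0(1) unfolding S_def mem_Collect_eq by metis
    qed
  next
    fix z assume "z \<in> {HS_dist \<rho> (chi_cc \<rho> k l) ^ 2 | k l. norm k = 1 \<and> norm l = 1}"
    then obtain k l where kl: "k \<in> S" "l \<in> S" "z = HS_dist \<rho> (chi_cc \<rho> k l) ^ 2"
      unfolding S_def by auto
    have "F k l \<le> lambda_M \<rho> l0" using bM[OF kl(1), of l] l0(2) kl(2) by force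
    then show "1/4 * (N - lambda_M \<rho> l0) \<le> z" using Dk[OF kl(1,2)] kl(3) by simp
  qed
  show ?thesis
    using l0(1) k0(1) supM supN eqMN Gv unfolding N_def x_def y_def T_def by auto
qed
end
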